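(* For all integers $n,k\ge0$, the number of bilateral Dyck paths of semilength $n$ with $k$ up-steps at odd height equals the number of bilateral Dyck paths of semilength $n$ with $k$ peaks.
   Context: A bilateral Dyck path is a lattice path starting at $(0,0)$ with steps $(1,1)$ (up-steps) and $(1,-1)$ (down-steps) ending on the line $y=0$. The semilength is half the number of steps. An up-step is at height $j$ if it goes from $(i-1,j-1)$ to $(i,j)$; it is at odd height if $j$ is odd. A peak is an up-step immediately followed by a down-step. *)

theory Defs
  imports Main
begin

text \<open>A lattice path is encoded as a list of steps: True = up-step (1,1), False = down-step (1,-1).\<close>

definition step_val :: "bool \<Rightarrow> int" where
  "step_val b = (if b then 1 else -1)"

definition height :: "bool list \<Rightarrow> nat \<Rightarrow> int" where
  "height p i = sum_list (map step_val (take i p))"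

text \<open>Bilateral Dyck paths of semilength n: 2n steps, start at (0,0), end on y = 0
  (the path may go below the x-axis).\<close>
definition bilateral_dyck :: "nat \<Rightarrow> bool list set" where
  "bilateral_dyck n = {p. length p = 2 * n \<and> height p (length p) = 0}"

text \<open>The (i+1)-th step (index i) is an up-step going from height j-1 to j with
  j = height p (Suc i); it is at odd height if j is odd.\<close>
definition odd_up_steps :: "bool list \<Rightarrow> nat" where
  "odd_up_steps p = card {i. i < length p \<and> p ! i \<and> odd (height p (Suc i))}"

definition peaks :: "bool list \<Rightarrow> nat" where
  "peaks p = card {i. Suc i < length p \<and> p ! i \<and> \<not> p ! Suc i}"

end

theory Submission
  imports Defs
begin

fun wl :: "nat \<Rightarrow> bool list list" where
  "wl 0 = [[]]"
| "wl (Suc m) = map (Cons True) (wl m) @ map (Cons False) (wl m)"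

lemma set_wl: "set (wl m) = {p. length p = m}"
proof (induction m)
  case 0 then show ?case by auto
next
  case (Suc m)
  show ?case
  proof (rule set_eqI, rule iffI)
    fix p :: "bool list" assume "p \<in> set (wl (Suc m))" then show "p \<in> {p. length p = Suc m}" using Suc by auto
  next
    fix p :: "bool list" assume "p \<in> {p. length p = Suc m}"
    then obtain x q where "p = x # q" "length q = m" by (cases p) auto
    then show "p \<in> set (wl (Suc m))" using Suc by (cases x) auto
  qed
qed

lemma distinct_wl: "distinct (wl m)"
  by (induction m) (auto simp: distinct_map inj_on_def)

lemma card_wl: "card {p. length p = m \<and> P p} = length (filter P (wl m))"
proof -
  have "{p. length p = m \<and> P p} = set (filter P (wl m))" by (auto simp: set_wl)
  then show ?thesis using distinct_wl by (metis distinct_card distinct_filter)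
qed

lemma filter_wl_Suc:
  "length (filter P (wl (Suc m))) = length (filter (\<lambda>q. P (True # q)) (wl m)) + length (filter (\<lambda>q. P (False # q)) (wl m))"
  by (simp add: filter_map o_def)

fun pk :: "bool list \<Rightarrow> nat" where
  "pk [] = 0"
| "pk (x # q) = (if q \<noteq> [] \<and> x \<and> \<not> hd q then 1 else 0) + pk q"

fun E :: "bool \<Rightarrow> bool list \<Rightarrow> nat" where
  "E b [] = 0"
| "E b (x # q) = (if b \<and> x then 1 else 0) + E (\<not> b) q"

lemma peaks_pk: "peaks p = pk p"
proof (induction p)
  case Nil then show ?case by (simp add: peaks_def)
next
  case (Cons x q)
  have eq: "{i. Suc i < length (x#q) \<and> (x#q)!i \<and> \<not> (x#q)!Suc i}
     = (if q \<noteq> [] \<and> x \<and> \<not> hd q then {0} else {}) \<union> Suc ` {i. Suc i < length q \<and> q!i \<and> \<not> q!Suc i}"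
    (is "?L = ?R")
  proof (rule set_eqI)
    fix i show "i \<in> ?L \<longleftrightarrow> i \<in> ?R"
      by (cases i; cases q) (auto)
  qed
  have fin: "finite {i. Suc i < length q \<and> q!i \<and> \<not> q!Suc i}" by (rule finite_subset[of _ "{..<length q}"]) auto
  have "card ?R = (if q \<noteq> [] \<and> x \<and> \<not> hd q then 1 else 0) + card {i. Suc i < length q \<and> q!i \<and> \<not> q!Suc i}"
    using fin by (auto simp: card_image)
  then show ?case using Cons eq by (simp add: peaks_def)
qed

lemma E_card: "card {i. i < length p \<and> p!i \<and> even i = b} = E b p"
proof (induction p arbitrary: b)
  case Nil then show ?case by simp
next
  case (Cons x q)
  have eq: "{i. i < length (x#q) \<and> (x#q)!i \<and> even i = b}
     = (if b \<and> x then {0} else {}) \<union> Suc ` {i. i < length q \<and> q!i \<and> even i = (\<not> b)}"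
    (is "?L = ?R")
  proof (rule set_eqI)
    fix i show "i \<in> ?L \<longleftrightarrow> i \<in> ?R"
      by (cases i) auto
  qed
  have fin: "finite {i. i < length q \<and> q!i \<and> even i = (\<not> b)}" by (rule finite_subset[of _ "{..<length q}"]) auto
  have "card ?R = (if b \<and> x then 1 else 0) + card {i. i < length q \<and> q!i \<and> even i = (\<not> b)}"
    using fin by (auto simp: card_image)
  then show ?case using Cons eq by simp
qed

lemma sum_parity: "odd (sum_list (map step_val xs)) \<longleftrightarrow> odd (length xs)"
  by (induction xs) (auto simp: step_val_def)

lemma sum_count: "sum_list (map step_val xs) = int (count_list xs True) - int (count_list xs False)"
  by (induction xs) (auto simp: step_val_def)

lemma count_len: "count_list xs True + count_list xs False = length xs"
  by (induction xs) auto

lemma count_E: "count_list p True = E True p + E False p"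
  by (induction p) auto

lemma odd_up_E: "odd_up_steps p = E True p"
proof -
  have "{i. i < length p \<and> p ! i \<and> odd (height p (Suc i))} = {i. i < length p \<and> p!i \<and> even i = True}"
    by (auto simp: height_def sum_parity)
  then show ?thesis using E_card[of p True] by (simp add: odd_up_steps_def)
qed

lemma bd_eq: "bilateral_dyck n = {p. length p = 2*n \<and> count_list p True = n}"
proof -
  have "(height p (length p) = 0) = (count_list p True = n)" if "length p = 2*n" for p
  proof -
    have h: "height p (length p) = int (count_list p True) - int (count_list p False)"
      by (simp add: height_def sum_count)
    have "count_list p True + count_list p False = 2*n" using count_len[of p] that by simp
    then show ?thesis unfolding h by linarith
  qed
  then show ?thesis by (auto simp: bilateral_dyck_def)
qed

lemma pk_F: "pk (False # q) = pk q" by simp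
lemma pk_TT: "pk (True # True # q) = pk (True # q)" by simp
lemma pk_TF: "pk (True # False # q) = Suc (pk (False # q))" by simp
lemma pk_T0: "pk [True] = 0" by simp

definition Dn :: "nat \<Rightarrow> nat \<Rightarrow> nat" where
  "Dn b k = (if b = 0 then (if k = 0 then 1 else 0) else (if k = 0 then 0 else (b - 1) choose (k - 1)))"

lemma count_le: "count_list p True \<le> length p"
  using count_len[of p] by simp

lemma Q_closed:
  "\<forall>a b k. m = a + b \<longrightarrow>
     length (filter (\<lambda>p. count_list p True = a \<and> pk (False # p) = k) (wl m)) = (a choose k) * (b choose k) \<and>
     length (filter (\<lambda>p. count_list p True = a \<and> pk (True # p) = k) (wl m)) = (Suc a choose k) * Dn b k"
proof (induction m)
  case 0
  have "wl 0 = [[]]" by simp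
  then show ?case by (auto simp: Dn_def)
next
  case (Suc m)
  show ?case
  proof (intro allI impI)
    fix a b k assume ab: "Suc m = a + b"
    let ?Q = "\<lambda>a k c. length (filter (\<lambda>p. count_list p True = a \<and> pk (c # p) = k) (wl m))"
    have zero: "?Q a' k' c = 0" if am: "a' > m" for a' k' c
    proof -
      have "count_list p True \<noteq> a'" if "p \<in> set (wl m)" for p
        using count_le[of p] that am by (auto simp: set_wl)
      then have "filter (\<lambda>p. count_list p True = a' \<and> pk (c # p) = k') (wl m) = []"
        by (auto simp: filter_empty_conv)
      then show ?thesis by simp
    qed
    have recF: "length (filter (\<lambda>p. count_list p True = a \<and> pk (False # p) = k) (wl (Suc m)))
       = (if a > 0 then ?Q (a - 1) k True else 0) + ?Q a k False"
      by (cases a) (simp_all del: pk.simps add: filter_wl_Suc o_def pk_F pk_TT pk_TF)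
    have recT: "length (filter (\<lambda>p. count_list p True = a \<and> pk (True # p) = k) (wl (Suc m)))
       = (if a > 0 then ?Q (a - 1) k True else 0) + (if k > 0 then ?Q a (k - 1) False else 0)"
      by (cases a; cases k) (simp_all del: pk.simps add: filter_wl_Suc o_def pk_F pk_TT pk_TF)
    show "length (filter (\<lambda>p. count_list p True = a \<and> pk (False # p) = k) (wl (Suc m))) = (a choose k) * (b choose k) \<and>
       length (filter (\<lambda>p. count_list p True = a \<and> pk (True # p) = k) (wl (Suc m))) = (Suc a choose k) * Dn b k"
    proof (cases a; cases b)
      fix b' assume a0: "a = 0" and b: "b = Suc b'"
      have m: "m = 0 + b'" using ab a0 b by simp
      have "?Q 0 k False = (0 choose k) * (b' choose k)" using Suc.IH m by blast
      moreover have "?Q 0 (k-1) False = (0 choose (k-1)) * (b' choose (k-1))" using Suc.IH m by blast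
      ultimately show ?thesis unfolding recF recT using a0 b
        by (cases k) (auto simp: Dn_def)
    next
      fix a' assume a: "a = Suc a'" and b0: "b = 0"
      have m: "m = a' + 0" using ab a b0 by simp
      have "?Q a' k True = (Suc a' choose k) * Dn 0 k" using Suc.IH m by blast
      moreover have "?Q a k False = 0" using a m by (intro zero) simp
      moreover have "?Q a (k-1) False = 0" using a m by (intro zero) simp
      ultimately show ?thesis unfolding recF recT using a b0
        by (cases k) (auto simp: Dn_def)
    next
      fix a' b' assume a: "a = Suc a'" and b: "b = Suc b'"
      have m1: "m = a' + Suc b'" and m2: "m = Suc a' + b'" using ab a b by auto
      have i1: "?Q a' k True = (Suc a' choose k) * Dn (Suc b') k" using Suc.IH m1 by blast
      have i2: "?Q (Suc a') k False = (Suc a' choose k) * (b' choose k)" using Suc.IH m2 by blast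
      have i3: "?Q (Suc a') (k-1) False = (Suc a' choose (k-1)) * (b' choose (k-1))" using Suc.IH m2 by blast
      show ?thesis unfolding recF recT using a b i1 i2 i3
        by (cases k) (auto simp: Dn_def algebra_simps)
    next
      assume "a = 0" "b = 0" then show ?thesis using ab by simp
    qed
  qed
qed

lemma lfc: "(\<And>x. P x = Q x) \<Longrightarrow> length (filter P xs) = length (filter Q xs)"
  by (metis filter_cong)


lemma N_closed:
  "length (filter (\<lambda>p. E True p = k \<and> E False p = j) (wl m)) = (Suc m div 2 choose k) * (m div 2 choose j)"
proof (induction m arbitrary: k j)
  case 0
  then show ?case by auto
next
  case (Suc m)
  have r: "length (filter (\<lambda>p. E True p = k \<and> E False p = j) (wl (Suc m)))
     = (if k > 0 then length (filter (\<lambda>p. E True p = j \<and> E False p = k - 1) (wl m)) else 0)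
       + length (filter (\<lambda>p. E True p = j \<and> E False p = k) (wl m))"
  proof -
    have e: "length (filter (\<lambda>p. E True p = k \<and> E False p = j) (wl (Suc m)))
      = length (filter (\<lambda>q. E True (True # q) = k \<and> E False (True # q) = j) (wl m))
      + length (filter (\<lambda>q. E True (False # q) = k \<and> E False (False # q) = j) (wl m))"
      by (rule filter_wl_Suc)
    have 2: "length (filter (\<lambda>q. E True (False # q) = k \<and> E False (False # q) = j) (wl m))
       = length (filter (\<lambda>p. E True p = j \<and> E False p = k) (wl m))"
      by (intro lfc) auto
    have 1: "length (filter (\<lambda>q. E True (True # q) = k \<and> E False (True # q) = j) (wl m))
       = (if k > 0 then length (filter (\<lambda>p. E True p = j \<and> E False p = k - 1) (wl m)) else 0)"
    proof (cases k)
      case 0 then show ?thesis by simp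
    next
      case (Suc k') then show ?thesis by (simp del: E.simps) (intro lfc, auto)
    qed
    show ?thesis by (simp only: e 1 2)
  qed
  have d: "Suc (Suc m) div 2 = Suc (m div 2)" by simp
  show ?case unfolding r Suc.IH d
    by (cases k) (auto simp: algebra_simps)
qed

theorem corollary2:
  fixes n k :: nat
  shows "card {p \<in> bilateral_dyck n. odd_up_steps p = k} = card {p \<in> bilateral_dyck n. peaks p = k}"
proof -
  have R: "card {p \<in> bilateral_dyck n. peaks p = k} = (n choose k) * (n choose k)"
  proof -
    have s: "{p \<in> bilateral_dyck n. peaks p = k} = {p. length p = n + n \<and> (count_list p True = n \<and> pk (False # p) = k)}"
      by (auto simp: bd_eq peaks_pk)
    have q: "length (filter (\<lambda>p. count_list p True = n \<and> pk (False # p) = k) (wl (n+n))) = (n choose k) * (n choose k)"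
      using conjunct1[OF Q_closed[of "n+n", rule_format, of n n k, OF refl]] .
    show ?thesis unfolding s card_wl q ..
  qed
  have L: "card {p \<in> bilateral_dyck n. odd_up_steps p = k} = (n choose k) * (n choose k)"
  proof (cases "k \<le> n")
    case True
    have s: "{p \<in> bilateral_dyck n. odd_up_steps p = k} = {p. length p = 2*n \<and> (E True p = k \<and> E False p = n - k)}"
      using True by (auto simp: bd_eq odd_up_E count_E)
    have q: "length (filter (\<lambda>p. E True p = k \<and> E False p = n - k) (wl (2*n))) = (n choose k) * (n choose (n - k))"
      unfolding N_closed by simp
    show ?thesis unfolding s card_wl q binomial_symmetric[OF True, symmetric] ..
  next
    case False
    have e: "{p \<in> bilateral_dyck n. odd_up_steps p = k} = {}"
      using False by (auto simp: bd_eq odd_up_E count_E)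
    show ?thesis unfolding e using False by simp
  qed
  show ?thesis using L R by simp
qed

end
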